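(* Let $G$ be a graph with a bramble $\mathcal{B}$ and let $\ell$ be a nonnegative integer. Let $S$ and $T$ be subsets of $V(G)$ such that $\mathcal{B}_S$ and $\mathcal{B}_T$ both have order at least $\ell$. Then there are $\ell$ pairwise vertex-disjoint paths in $G$ from $S$ to $T$.
   Context: All graphs are finite and simple. A bramble $\mathcal{B}$ in a graph $G$ is a family of connected subgraphs of $G$ such that every two of them share a vertex or are joined by an edge of $G$. A hitting set for $\mathcal{B}$ is a set of vertices intersecting every element of $\mathcal{B}$; the order of $\mathcal{B}$ is the minimum size of a hitting set. Any subset of a bramble is a bramble. For $X\subseteq V(G)$, $\mathcal{B}_X$ denotes the set of elements of $\mathcal{B}$ that intersect $X$. *)

theory Defs
  imports Main
begin

definition graph :: "'a set \<Rightarrow> ('a \<Rightarrow> 'a \<Rightarrow> bool) \<Rightarrow> bool" where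
  "graph V E \<longleftrightarrow> finite V \<and> (\<forall>u v. E u v \<longrightarrow> u \<in> V \<and> v \<in> V \<and> E v u \<and> u \<noteq> v)"

definition connected_set :: "'a set \<Rightarrow> ('a \<Rightarrow> 'a \<Rightarrow> bool) \<Rightarrow> 'a set \<Rightarrow> bool" where
  "connected_set V E X \<longleftrightarrow> X \<noteq> {} \<and> X \<subseteq> V \<and>
     (\<forall>u\<in>X. \<forall>v\<in>X. (\<lambda>x y. x \<in> X \<and> y \<in> X \<and> E x y)\<^sup>*\<^sup>* u v)"

definition touch :: "('a \<Rightarrow> 'a \<Rightarrow> bool) \<Rightarrow> 'a set \<Rightarrow> 'a set \<Rightarrow> bool" where
  "touch E X Y \<longleftrightarrow> X \<inter> Y \<noteq> {} \<or> (\<exists>x\<in>X. \<exists>y\<in>Y. E x y)"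

text \<open>A bramble, each element represented by its (connected) vertex set.\<close>
definition bramble :: "'a set \<Rightarrow> ('a \<Rightarrow> 'a \<Rightarrow> bool) \<Rightarrow> 'a set set \<Rightarrow> bool" where
  "bramble V E B \<longleftrightarrow> (\<forall>X\<in>B. connected_set V E X) \<and> (\<forall>X\<in>B. \<forall>Y\<in>B. touch E X Y)"

definition hitting_set :: "'a set \<Rightarrow> 'a set set \<Rightarrow> 'a set \<Rightarrow> bool" where
  "hitting_set V B H \<longleftrightarrow> H \<subseteq> V \<and> (\<forall>X\<in>B. X \<inter> H \<noteq> {})"

definition bramble_order :: "'a set \<Rightarrow> 'a set set \<Rightarrow> nat" where
  "bramble_order V B = (LEAST k. \<exists>H. hitting_set V B H \<and> card H = k)"

definition bramble_restr :: "'a set set \<Rightarrow> 'a set \<Rightarrow> 'a set set" where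
  "bramble_restr B X = {Y \<in> B. Y \<inter> X \<noteq> {}}"

definition is_path :: "'a set \<Rightarrow> ('a \<Rightarrow> 'a \<Rightarrow> bool) \<Rightarrow> 'a list \<Rightarrow> bool" where
  "is_path V E p \<longleftrightarrow> p \<noteq> [] \<and> distinct p \<and> set p \<subseteq> V \<and>
     (\<forall>i. Suc i < length p \<longrightarrow> E (p ! i) (p ! Suc i))"

definition path_from_to :: "'a set \<Rightarrow> ('a \<Rightarrow> 'a \<Rightarrow> bool) \<Rightarrow> 'a set \<Rightarrow> 'a set \<Rightarrow> 'a list \<Rightarrow> bool" where
  "path_from_to V E S T p \<longleftrightarrow> is_path V E p \<and> set p \<inter> S = {hd p} \<and> set p \<inter> T = {last p}"

end

theory Submission
  imports Defs
begin

fun walk :: "('a \<Rightarrow> 'a \<Rightarrow> bool) \<Rightarrow> 'a list \<Rightarrow> bool" where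
  "walk E [] = False"
| "walk E [x] = True"
| "walk E (x # y # xs) = (E x y \<and> walk E (y # xs))"

lemma walk_ne: "walk E p \<Longrightarrow> p \<noteq> []"
  by (cases p) auto

lemma walk_split: "walk E (xs @ v # ys) \<longleftrightarrow> walk E (xs @ [v]) \<and> walk E (v # ys)"
proof (induction xs)
  case Nil
  then show ?case by simp
next
  case (Cons a xs)
  then show ?case by (cases xs) auto
qed

lemma walk_append: "walk E xs \<Longrightarrow> walk E ys \<Longrightarrow> E (last xs) (hd ys) \<Longrightarrow> walk E (xs @ ys)"
proof (induction E xs rule: walk.induct)
  case (2 E x)
  then show ?case by (cases ys) auto
qed auto

lemma walk_append_tl: "walk E xs \<Longrightarrow> walk E ys \<Longrightarrow> last xs = hd ys \<Longrightarrow> walk E (xs @ tl ys)"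
proof -
  assume a: "walk E xs" "walk E ys" "last xs = hd ys"
  have xs: "xs = butlast xs @ [last xs]" using walk_ne[OF a(1)] by simp
  have ys: "ys = hd ys # tl ys" using walk_ne[OF a(2)] by simp
  have "xs @ tl ys = butlast xs @ last xs # tl ys" by (subst xs) simp
  moreover have "walk E (butlast xs @ [last xs])" using a(1) xs by metis
  moreover have "walk E (last xs # tl ys)" using a(2,3) ys by metis
  ultimately show ?thesis using walk_split by metis
qed

lemma walk_mono: "walk E p \<Longrightarrow> (\<forall>a b. E a b \<longrightarrow> F a b) \<Longrightarrow> walk F p"
  by (induction E p rule: walk.induct) auto

lemma walk_del1: "walk E p \<Longrightarrow> x \<notin> set (butlast p) \<Longrightarrow> walk (\<lambda>a b. E a b \<and> (a, b) \<noteq> (x, y)) p"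
  by (induction E p rule: walk.induct) auto

lemma walk_del2: "walk E p \<Longrightarrow> y \<notin> set (tl p) \<Longrightarrow> walk (\<lambda>a b. E a b \<and> (a, b) \<noteq> (x, y)) p"
  by (induction E p rule: walk.induct) auto

lemma walk_noedge: "walk E p \<Longrightarrow> \<forall>a b. \<not> E a b \<Longrightarrow> p = [hd p]"
  by (induction E p rule: walk.induct) auto

lemma walk_nth: "walk E p \<Longrightarrow> Suc i < length p \<Longrightarrow> E (p ! i) (p ! Suc i)"
proof (induction E p arbitrary: i rule: walk.induct)
  case (3 E x y xs)
  then show ?case by (cases i) auto
qed auto

lemma walk_distinct: "walk E p \<Longrightarrow> \<exists>q. walk E q \<and> distinct q \<and> hd q = hd p \<and> last q = last p \<and> set q \<subseteq> set p"
proof (induction E p rule: walk.induct)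
  case (2 E x)
  then show ?case by (rule_tac x="[x]" in exI) auto
next
  case (3 E x y xs)
  then obtain q where q: "walk E q" "distinct q" "hd q = y" "last q = last (y # xs)" "set q \<subseteq> set (y # xs)"
    by auto
  show ?case
  proof (cases "x \<in> set q")
    case True
    then obtain a b where ab: "q = a @ x # b" by (meson split_list)
    have "walk E (x # b)" using q(1) ab walk_split by metis
    moreover have "distinct (x # b)" using q(2) ab by simp
    moreover have "last (x # b) = last (x # y # xs)" using q(4) ab by simp
    moreover have "set (x # b) \<subseteq> set (x # y # xs)" using q(5) ab by auto
    ultimately show ?thesis by (rule_tac x="x # b" in exI) simp
  next
    case False
    have qq: "q = y # tl q" using q(1,3) walk_ne by (metis list.collapse)
    have "walk E (x # q)" using 3(2) q(1) qq by (metis walk.simps(3))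
    moreover have "last (x # q) = last (x # y # xs)" using q(4) qq by (metis last_ConsR list.distinct(1))
    ultimately show ?thesis using False q by (rule_tac x="x # q" in exI) auto
  qed
qed auto

lemma walk_rtranclp:
  assumes "(\<lambda>x y. x \<in> Z \<and> y \<in> Z \<and> E x y)\<^sup>*\<^sup>* u v" "u \<in> Z"
  shows "\<exists>p. walk E p \<and> hd p = u \<and> last p = v \<and> set p \<subseteq> Z"
  using assms
proof (induction rule: rtranclp_induct)
  case base
  then show ?case by (rule_tac x="[u]" in exI) auto
next
  case (step b c)
  then obtain p where p: "walk E p" "hd p = u" "last p = b" "set p \<subseteq> Z" by auto
  have "walk E (p @ [c])" using walk_append[OF p(1), of "[c]"] step p by simp
  then show ?case using p step walk_ne[OF p(1)] by (rule_tac x="p @ [c]" in exI) auto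
qed


definition conn :: "('a \<Rightarrow> 'a \<Rightarrow> bool) \<Rightarrow> 'a set \<Rightarrow> 'a set \<Rightarrow> 'a set \<Rightarrow> bool" where
  "conn E S T X \<longleftrightarrow> (\<exists>p. walk E p \<and> hd p \<in> S \<and> last p \<in> T \<and> set p \<inter> X = {})"

definition disj :: "'a list set \<Rightarrow> bool" where
  "disj P \<longleftrightarrow> (\<forall>p\<in>P. \<forall>q\<in>P. p \<noteq> q \<longrightarrow> set p \<inter> set q = {})"

definition linkage :: "('a \<Rightarrow> 'a \<Rightarrow> bool) \<Rightarrow> 'a set \<Rightarrow> 'a set \<Rightarrow> 'a list set \<Rightarrow> bool" where
  "linkage E S T P \<longleftrightarrow> (\<forall>p\<in>P. walk E p \<and> hd p \<in> S \<and> last p \<in> T) \<and> disj P"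

lemma refine:
  assumes "finite P" "disj P" "\<forall>p\<in>P. \<exists>q. Q q \<and> q \<noteq> [] \<and> set q \<subseteq> set p"
  shows "\<exists>P'. finite P' \<and> card P' = card P \<and> (\<forall>q\<in>P'. Q q) \<and> disj P'"
proof -
  obtain f where f: "\<forall>p\<in>P. Q (f p) \<and> f p \<noteq> [] \<and> set (f p) \<subseteq> set p"
    using bchoice[OF assms(3)] by blast
  have inj: "inj_on f P"
  proof (rule inj_onI)
    fix p q assume "p \<in> P" "q \<in> P" "f p = f q"
    then have "set (f p) \<subseteq> set p \<inter> set q" "f p \<noteq> []" using f by (metis Int_subset_iff, blast)
    then show "p = q" using assms(2) \<open>p \<in> P\<close> \<open>q \<in> P\<close> unfolding disj_def
      by (metis Int_subset_iff set_empty subset_empty)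
  qed
  have "disj (f ` P)" unfolding disj_def
  proof (intro ballI impI)
    fix a b assume "a \<in> f ` P" "b \<in> f ` P" "a \<noteq> b"
    then obtain p q where "p \<in> P" "q \<in> P" "a = f p" "b = f q" by blast
    then have "p \<noteq> q" using \<open>a \<noteq> b\<close> by auto
    then have "set p \<inter> set q = {}" using assms(2) \<open>p \<in> P\<close> \<open>q \<in> P\<close> unfolding disj_def by auto
    then show "set a \<inter> set b = {}" using f \<open>p \<in> P\<close> \<open>q \<in> P\<close> \<open>a = f p\<close> \<open>b = f q\<close> by blast
  qed
  moreover have "card (f ` P) = card P" using inj by (simp add: card_image)
  moreover have "\<forall>q\<in>f ` P. Q q" using f by blast
  ultimately show ?thesis using assms(1) by blast
qed

lemma ends_bij:
  assumes "finite X" "finite P" "card P = card X" "\<forall>p\<in>P. e p \<in> set p \<and> e p \<in> X" "disj P"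
  shows "e ` P = X \<and> inj_on e P"
proof -
  have inj: "inj_on e P"
  proof (rule inj_onI)
    fix p q assume "p \<in> P" "q \<in> P" "e p = e q"
    then have "e p \<in> set p \<inter> set q" using assms(4) by auto
    then show "p = q" using assms(5) \<open>p \<in> P\<close> \<open>q \<in> P\<close> unfolding disj_def by auto
  qed
  have "card (e ` P) = card X" using inj assms(3) by (simp add: card_image)
  moreover have "e ` P \<subseteq> X" using assms(4) by auto
  ultimately show ?thesis using inj assms(1) card_subset_eq by blast
qed


lemma butlast_sub: "set a \<subseteq> set (butlast (a @ z # b))"
  by (simp add: butlast_append)

lemma tl_subset: "set (tl p) \<subseteq> set p"
  by (cases p) auto

lemma tl_sub: "set d \<subseteq> set (tl (c @ z # d))"
  by (cases c) auto

lemma not_butlast_last: "p \<noteq> [] \<Longrightarrow> z \<in> set p \<Longrightarrow> z \<notin> set (butlast p) \<Longrightarrow> z = last p"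
  by (metis append_butlast_last_id butlast_snoc in_set_butlast_appendI rotate1.simps(2) set_rotate1 set_ConsD)

lemma not_tl_hd: "p \<noteq> [] \<Longrightarrow> z \<in> set p \<Longrightarrow> z \<notin> set (tl p) \<Longrightarrow> z = hd p"
  by (metis list.collapse set_ConsD)

lemma menger:
  "finite {(u,v). E u v} \<Longrightarrow> finite S \<Longrightarrow> finite T \<Longrightarrow>
   (\<forall>X. finite X \<longrightarrow> card X < k \<longrightarrow> conn E S T X) \<Longrightarrow>
   \<exists>P. finite P \<and> card P = k \<and> linkage E S T P"
proof (induction "card {(u,v). E u v}" arbitrary: E S T k rule: less_induct)
  case less
  show ?case
  proof (cases "\<exists>x y. E x y")
    case False
    have nc: "\<not> conn E S T (S \<inter> T)"
    proof
      assume "conn E S T (S \<inter> T)"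
      then obtain p where p: "walk E p" "hd p \<in> S" "last p \<in> T" "set p \<inter> (S \<inter> T) = {}"
        unfolding conn_def by blast
      have "p = [hd p]" using walk_noedge p(1) False by blast
      then show False using p by (metis IntI empty_iff last.simps list.set_intros(1))
    qed
    have "k \<le> card (S \<inter> T)" using less.prems(4) nc less.prems(2) by (meson finite_Int not_le)
    then obtain U where U: "U \<subseteq> S \<inter> T" "card U = k" by (meson obtain_subset_with_card_n)
    have fU: "finite U" using U(1) less.prems(2) finite_subset by blast
    define P where "P = (\<lambda>v. [v]) ` U"
    have "card P = k" unfolding P_def using U by (simp add: card_image inj_on_def)
    moreover have "linkage E S T P" unfolding linkage_def disj_def P_def using U by auto
    ultimately show ?thesis using fU P_def by blast
  next
    case True
    then obtain x y where e: "E x y" by blast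
    define E' where "E' = (\<lambda>a b. E a b \<and> (a, b) \<noteq> (x, y))"
    have sub: "{(u,v). E' u v} \<subset> {(u,v). E u v}" using e unfolding E'_def by auto
    have finE': "finite {(u,v). E' u v}" using less.prems(1) sub finite_subset psubset_imp_subset by blast
    have lt: "card {(u,v). E' u v} < card {(u,v). E u v}" using psubset_card_mono[OF less.prems(1) sub] .
    have mono: "\<forall>a b. E' a b \<longrightarrow> E a b" unfolding E'_def by simp
    show ?thesis
    proof (cases "\<forall>X. finite X \<longrightarrow> card X < k \<longrightarrow> conn E' S T X")
      case True
      from less.hyps[OF lt finE' less.prems(2,3) True] obtain P where
        P: "finite P" "card P = k" "linkage E' S T P" by blast
      have "linkage E S T P" using P(3) walk_mono[OF _ mono] unfolding linkage_def by blast
      then show ?thesis using P by blast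
    next
      case False
      then obtain Y where Y: "finite Y" "card Y < k" "\<not> conn E' S T Y" by blast
      have sx: "\<not> conn E S T (insert x Y)"
      proof
        assume "conn E S T (insert x Y)"
        then obtain p where p: "walk E p" "hd p \<in> S" "last p \<in> T" "set p \<inter> insert x Y = {}"
          unfolding conn_def by blast
        have "x \<notin> set (butlast p)" using p(4) in_set_butlastD by fastforce
        then have "walk E' p" unfolding E'_def by (rule walk_del1[OF p(1)])
        then have "conn E' S T Y" using p unfolding conn_def by blast
        with Y(3) show False ..
      qed
      have sy: "\<not> conn E S T (insert y Y)"
      proof
        assume "conn E S T (insert y Y)"
        then obtain p where p: "walk E p" "hd p \<in> S" "last p \<in> T" "set p \<inter> insert y Y = {}"
          unfolding conn_def by blast
        have "set (tl p) \<subseteq> set p" by (cases p) auto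
        then have "y \<notin> set (tl p)" using p(4) by blast
        then have "walk E' p" unfolding E'_def by (rule walk_del2[OF p(1)])
        then have "conn E' S T Y" using p unfolding conn_def by blast
        with Y(3) show False ..
      qed
      have kx: "k \<le> card (insert x Y)" using less.prems(4) sx Y(1) by (meson finite_insert not_le)
      have ky: "k \<le> card (insert y Y)" using less.prems(4) sy Y(1) by (meson finite_insert not_le)
      have xY: "x \<notin> Y" using kx Y(2) by (metis insert_absorb not_le)
      have yY: "y \<notin> Y" using ky Y(2) by (metis insert_absorb not_le)
      have cX: "card (insert x Y) = k" using kx Y xY by simp
      have cY: "card (insert y Y) = k" using ky Y yY by simp
      have c1: "\<forall>Z. finite Z \<longrightarrow> card Z < k \<longrightarrow> conn E' S (insert x Y) Z"
      proof (intro allI impI)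
        fix Z :: "'a set" assume "finite Z" "card Z < k"
        then have "conn E S T Z" using less.prems(4) by blast
        then obtain p where p: "walk E p" "hd p \<in> S" "last p \<in> T" "set p \<inter> Z = {}"
          unfolding conn_def by blast
        have "\<exists>v\<in>set p. v \<in> insert x Y" using sx p unfolding conn_def by blast
        then obtain a v b where abv: "p = a @ v # b" "v \<in> insert x Y" "\<forall>z\<in>set a. z \<notin> insert x Y"
          using split_list_first_prop[of p "\<lambda>v. v \<in> insert x Y"] by blast
        have "walk E (a @ [v])" using p(1) abv walk_split by metis
        moreover have "x \<notin> set (butlast (a @ [v]))" using abv(3) by auto
        ultimately have "walk E' (a @ [v])" unfolding E'_def by (rule walk_del1)
        moreover have "hd (a @ [v]) = hd p" using abv by (cases a) auto
        moreover have "last (a @ [v]) = v" by simp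
        moreover have "set (a @ [v]) \<subseteq> set p" using abv by auto
        ultimately show "conn E' S (insert x Y) Z" unfolding conn_def using p abv
          by (rule_tac x="a @ [v]" in exI) auto
      qed
      have c2: "\<forall>Z. finite Z \<longrightarrow> card Z < k \<longrightarrow> conn E' (insert y Y) T Z"
      proof (intro allI impI)
        fix Z :: "'a set" assume "finite Z" "card Z < k"
        then have "conn E S T Z" using less.prems(4) by blast
        then obtain p where p: "walk E p" "hd p \<in> S" "last p \<in> T" "set p \<inter> Z = {}"
          unfolding conn_def by blast
        have "\<exists>v\<in>set p. v \<in> insert y Y" using sy p unfolding conn_def by blast
        then obtain a v b where abv: "p = a @ v # b" "v \<in> insert y Y" "\<forall>z\<in>set b. z \<notin> insert y Y"
          using split_list_last_prop[of p "\<lambda>v. v \<in> insert y Y"] by blast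
        have "walk E (v # b)" using p(1) abv walk_split by metis
        moreover have "y \<notin> set (tl (v # b))" using abv(3) by auto
        ultimately have "walk E' (v # b)" unfolding E'_def by (rule walk_del2)
        moreover have "last (v # b) = last p" using abv by simp
        moreover have "set (v # b) \<subseteq> set p" using abv by auto
        ultimately show "conn E' (insert y Y) T Z" unfolding conn_def using p abv
          by (rule_tac x="v # b" in exI) auto
      qed
      obtain P1 where P1: "finite P1" "card P1 = k" "linkage E' S (insert x Y) P1"
        using less.hyps[OF lt finE' less.prems(2) _ c1] Y(1) by blast
      obtain P2 where P2: "finite P2" "card P2 = k" "linkage E' (insert y Y) T P2"
        using less.hyps[OF lt finE' _ less.prems(3) c2] Y(1) by blast
      have "\<forall>p\<in>P1. \<exists>q. (walk E' q \<and> hd q \<in> S \<and> last q \<in> insert x Y \<and> set (butlast q) \<inter> insert x Y = {})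
                 \<and> q \<noteq> [] \<and> set q \<subseteq> set p"
      proof
        fix p assume "p \<in> P1"
        then have p: "walk E' p" "hd p \<in> S" "last p \<in> insert x Y" using P1 unfolding linkage_def by auto
        have "\<exists>v\<in>set p. v \<in> insert x Y" using p walk_ne last_in_set by metis
        then obtain a v b where abv: "p = a @ v # b" "v \<in> insert x Y" "\<forall>z\<in>set a. z \<notin> insert x Y"
          using split_list_first_prop[of p "\<lambda>v. v \<in> insert x Y"] by blast
        have "walk E' (a @ [v])" using p(1) abv walk_split by metis
        moreover have "hd (a @ [v]) = hd p" using abv by (cases a) auto
        moreover have "set (a @ [v]) \<subseteq> set p" using abv by auto
        ultimately show "\<exists>q. (walk E' q \<and> hd q \<in> S \<and> last q \<in> insert x Y \<and> set (butlast q) \<inter> insert x Y = {})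
                 \<and> q \<noteq> [] \<and> set q \<subseteq> set p" using p abv
          by (rule_tac x="a @ [v]" in exI) auto
      qed
      from refine[OF P1(1) _ this] P1(3) obtain P1' where P1': "finite P1'" "card P1' = k"
        "\<forall>q\<in>P1'. walk E' q \<and> hd q \<in> S \<and> last q \<in> insert x Y \<and> set (butlast q) \<inter> insert x Y = {}"
        "disj P1'" unfolding linkage_def P1(2) by blast
      have "\<forall>p\<in>P2. \<exists>q. (walk E' q \<and> hd q \<in> insert y Y \<and> last q \<in> T \<and> set (tl q) \<inter> insert y Y = {})
                 \<and> q \<noteq> [] \<and> set q \<subseteq> set p"
      proof
        fix p assume "p \<in> P2"
        then have p: "walk E' p" "hd p \<in> insert y Y" "last p \<in> T" using P2 unfolding linkage_def by auto
        have "\<exists>v\<in>set p. v \<in> insert y Y" using p walk_ne hd_in_set by metis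
        then obtain a v b where abv: "p = a @ v # b" "v \<in> insert y Y" "\<forall>z\<in>set b. z \<notin> insert y Y"
          using split_list_last_prop[of p "\<lambda>v. v \<in> insert y Y"] by blast
        have "walk E' (v # b)" using p(1) abv walk_split by metis
        moreover have "last (v # b) = last p" using abv by simp
        moreover have "set (v # b) \<subseteq> set p" using abv by auto
        ultimately show "\<exists>q. (walk E' q \<and> hd q \<in> insert y Y \<and> last q \<in> T \<and> set (tl q) \<inter> insert y Y = {})
                 \<and> q \<noteq> [] \<and> set q \<subseteq> set p" using p abv
          by (rule_tac x="v # b" in exI) auto
      qed
      from refine[OF P2(1) _ this] P2(3) obtain P2' where P2': "finite P2'" "card P2' = k"
        "\<forall>q\<in>P2'. walk E' q \<and> hd q \<in> insert y Y \<and> last q \<in> T \<and> set (tl q) \<inter> insert y Y = {}"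
        "disj P2'" unfolding linkage_def P2(2) by blast
      have "\<forall>p\<in>P1'. last p \<in> set p \<and> last p \<in> insert x Y"
        using P1'(3) walk_ne last_in_set by blast
      then have b1: "last ` P1' = insert x Y \<and> inj_on last P1'"
        using ends_bij[OF _ P1'(1) _ _ P1'(4), of "insert x Y" last] Y(1) P1'(2) cX by simp
      have "\<forall>p\<in>P2'. hd p \<in> set p \<and> hd p \<in> insert y Y"
        using P2'(3) walk_ne hd_in_set by blast
      then have b2: "hd ` P2' = insert y Y \<and> inj_on hd P2'"
        using ends_bij[OF _ P2'(1) _ _ P2'(4), of "insert y Y" hd] Y(1) P2'(2) cY by simp
      define fP where "fP v = the_inv_into P1' last v" for v
      define fQ where "fQ v = the_inv_into P2' hd v" for v
      have fP: "fP v \<in> P1' \<and> last (fP v) = v" if "v \<in> insert x Y" for v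
        using b1 that the_inv_into_into[of last P1' v P1'] f_the_inv_into_f[of last P1' v]
        unfolding fP_def by auto
      have fQ: "fQ v \<in> P2' \<and> hd (fQ v) = v" if "v \<in> insert y Y" for v
        using b2 that the_inv_into_into[of hd P2' v P2'] f_the_inv_into_f[of hd P2' v]
        unfolding fQ_def by auto
      have cross: "z \<in> Y \<and> z = last p \<and> z = hd q"
        if pq: "p \<in> P1'" "q \<in> P2'" "z \<in> set p" "z \<in> set q" for p q z
      proof -
        have p: "walk E' p" "hd p \<in> S" "last p \<in> insert x Y" "set (butlast p) \<inter> insert x Y = {}"
          using P1'(3) pq by auto
        have q: "walk E' q" "hd q \<in> insert y Y" "last q \<in> T" "set (tl q) \<inter> insert y Y = {}"
          using P2'(3) pq by auto
        have zY: "z \<in> Y"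
        proof (rule ccontr)
          assume nz: "z \<notin> Y"
          obtain a b where ab: "p = a @ z # b" using pq(3) split_list by metis
          obtain c d where cd: "q = c @ z # d" using pq(4) split_list by metis
          have "walk E' (a @ [z])" using p(1) ab walk_split by metis
          moreover have "walk E' (z # d)" using q(1) cd walk_split by metis
          ultimately have w: "walk E' (a @ z # d)" using walk_split by metis
          have h: "hd (a @ z # d) = hd p" using ab by (cases a) auto
          have l: "last (a @ z # d) = last q" using cd by simp
          have "set a \<inter> Y = {}" using p(4) butlast_sub[of a z b] ab by auto
          moreover have "set d \<inter> Y = {}" using q(4) tl_sub[of d c z] cd by auto
          ultimately have "set (a @ z # d) \<inter> Y = {}" using nz by auto
          then have "conn E' S T Y" unfolding conn_def using w h l p(2) q(3)
            by (rule_tac x="a @ z # d" in exI) simp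
          then show False using Y(3) by blast
        qed
        have "z = last p" using not_butlast_last[OF walk_ne[OF p(1)] pq(3)] p(4) zY by blast
        moreover have "z = hd q" using not_tl_hd[OF walk_ne[OF q(1)] pq(4)] q(4) zY by blast
        ultimately show ?thesis using zY by blast
      qed
      define h where "h v = (if v = x then y else v)" for v
      have hin: "h v \<in> insert y Y" if "v \<in> insert x Y" for v using that unfolding h_def by auto
      define g where "g v = (if v = x then fP x @ fQ y else fP v @ tl (fQ v))" for v
      have gset: "set (g v) \<subseteq> set (fP v) \<union> set (fQ (h v))" for v
        unfolding g_def h_def using tl_subset[of "fQ v"] by auto
      have gprop: "walk E (g v) \<and> hd (g v) \<in> S \<and> last (g v) \<in> T \<and> g v \<noteq> []" if v: "v \<in> insert x Y" for v
      proof -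
        have a: "walk E' (fP v)" "hd (fP v) \<in> S" "last (fP v) = v" "fP v \<in> P1'"
          using fP[OF v] P1'(3) by auto
        have b: "walk E' (fQ (h v))" "last (fQ (h v)) \<in> T" "hd (fQ (h v)) = h v"
          using fQ[OF hin[OF v]] P2'(3) by auto
        have a': "walk E (fP v)" using a(1) walk_mono mono by blast
        have b': "walk E (fQ (h v))" using b(1) walk_mono mono by blast
        show ?thesis
        proof (cases "v = x")
          case True
          then have "walk E (g v)" unfolding g_def using walk_append[OF a' b'] a(3) b(3) e
            unfolding h_def by simp
          moreover have "hd (g v) \<in> S" using a(2) walk_ne[OF a(1)] True unfolding g_def by simp
          moreover have "last (g v) \<in> T" using b(2) walk_ne[OF b(1)] True unfolding g_def h_def by simp
          ultimately show ?thesis using walk_ne by blast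
        next
          case False
          then have hv: "h v = v" unfolding h_def by simp
          have "walk E (g v)" unfolding g_def using walk_append_tl[OF a' b'] a(3) b(3) False hv by simp
          moreover have "hd (g v) \<in> S" using a(2) walk_ne[OF a(1)] False unfolding g_def by simp
          moreover have "last (g v) \<in> T"
          proof (cases "tl (fQ v) = []")
            case True
            then have "fQ v = [v]" using b(3) hv walk_ne[OF b(1)] by (metis list.collapse)
            then show ?thesis using b(2) hv True False unfolding g_def by (simp add: a(3))
          next
            case tlne: False
            then have "last (g v) = last (tl (fQ v))" unfolding g_def using False by simp
            also have "\<dots> = last (fQ v)" using tlne by (metis last_tl)
            finally show ?thesis using b(2) hv by simp
          qed
          ultimately show ?thesis using walk_ne by blast
        qed
      qed
      have gdisj: "set (g u) \<inter> set (g v) = {}" if uv: "u \<in> insert x Y" "v \<in> insert x Y" "u \<noteq> v" for u v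
      proof -
        have pu: "fP u \<in> P1'" "last (fP u) = u" using fP uv by auto
        have pv: "fP v \<in> P1'" "last (fP v) = v" using fP uv by auto
        have qu: "fQ (h u) \<in> P2'" "hd (fQ (h u)) = h u" using fQ hin uv by auto
        have qv: "fQ (h v) \<in> P2'" "hd (fQ (h v)) = h v" using fQ hin uv by auto
        have hne: "h u \<noteq> h v" using uv yY unfolding h_def by auto
        have d1: "set (fP u) \<inter> set (fP v) = {}" using P1'(4) pu pv uv(3) unfolding disj_def by metis
        have d2: "set (fQ (h u)) \<inter> set (fQ (h v)) = {}" using P2'(4) qu qv hne unfolding disj_def by metis
        have d3: "set (fP a) \<inter> set (fQ (h b)) = {}" if ab: "a \<in> insert x Y" "b \<in> insert x Y" "a \<noteq> b" for a b
        proof (rule ccontr)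
          assume "set (fP a) \<inter> set (fQ (h b)) \<noteq> {}"
          then obtain z where z: "z \<in> set (fP a)" "z \<in> set (fQ (h b))" by blast
          have "z \<in> Y \<and> z = last (fP a) \<and> z = hd (fQ (h b))"
            using cross[OF _ _ z] fP[OF ab(1)] fQ[OF hin[OF ab(2)]] by blast
          then have "z \<in> Y" "z = a" "z = h b" using fP[OF ab(1)] fQ[OF hin[OF ab(2)]] by auto
          then show False using ab yY unfolding h_def by (auto split: if_splits)
        qed
        show ?thesis using gset[of u] gset[of v] d1 d2 d3[OF uv] d3[OF uv(2,1) uv(3)[symmetric]] by blast
      qed
      have ginj: "inj_on g (insert x Y)"
      proof (rule inj_onI)
        fix u v assume "u \<in> insert x Y" "v \<in> insert x Y" "g u = g v"
        then show "u = v" using gdisj[of u v] gprop[of u] by (metis inf.idem set_empty)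
      qed
      define R where "R = g ` insert x Y"
      have "finite R" unfolding R_def using Y(1) by simp
      moreover have "card R = k" unfolding R_def using card_image[OF ginj] cX by argo
      moreover have "linkage E S T R" unfolding linkage_def disj_def R_def
        using gprop gdisj by blast
      ultimately show ?thesis by blast
    qed
  qed
qed


lemma last_append_tl: "xs \<noteq> [] \<Longrightarrow> ys \<noteq> [] \<Longrightarrow> last xs = hd ys \<Longrightarrow> last (xs @ tl ys) = last ys"
  by (cases ys; cases "tl ys") auto

lemma walk_in_V: "walk E p \<Longrightarrow> hd p \<in> V \<Longrightarrow> (\<forall>u v. E u v \<longrightarrow> u \<in> V \<and> v \<in> V) \<Longrightarrow> set p \<subseteq> V"
  by (induction E p rule: walk.induct) auto

lemma walk_path:
  assumes p: "walk E p" "hd p \<in> S" "last p \<in> T" "set p \<subseteq> V"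
  shows "\<exists>q. path_from_to V E S T q \<and> q \<noteq> [] \<and> set q \<subseteq> set p"
proof -
  have "\<exists>v\<in>set p. v \<in> S" using p walk_ne hd_in_set by metis
  then obtain a v b where abv: "p = a @ v # b" "v \<in> S" "\<forall>z\<in>set b. z \<notin> S"
    using split_list_last_prop[of p "\<lambda>v. v \<in> S"] by blast
  have w1: "walk E (v # b)" using p(1) abv walk_split by metis
  have l1: "last (v # b) \<in> T" using p(3) abv by simp
  have "\<exists>w\<in>set (v # b). w \<in> T" using l1 last_in_set by (metis list.distinct(1))
  then obtain c w d where cwd: "v # b = c @ w # d" "w \<in> T" "\<forall>z\<in>set c. z \<notin> T"
    using split_list_first_prop[of "v # b" "\<lambda>v. v \<in> T"] by blast
  have w2: "walk E (c @ [w])" using w1 cwd walk_split by metis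
  have h2: "hd (c @ [w]) = v" using cwd by (cases c) auto
  have s2: "set (c @ [w]) \<subseteq> set (v # b)" 
  proof -
    have "set (v # b) = set (c @ w # d)" using cwd(1) by simp
    then show ?thesis by auto
  qed
  have S2: "\<forall>z\<in>set (c @ [w]). z \<in> S \<longrightarrow> z = v" using s2 abv(3) by auto
  have T2: "\<forall>z\<in>set (c @ [w]). z \<in> T \<longrightarrow> z = w" using cwd(3) by auto
  obtain q where q: "walk E q" "distinct q" "hd q = v" "last q = w" "set q \<subseteq> set (c @ [w])"
    using walk_distinct[OF w2] h2 by auto
  have sq: "set q \<subseteq> set p" using q(5) s2 abv(1) by auto
  have qne: "q \<noteq> []" using walk_ne q(1) by blast
  have "is_path V E q" unfolding is_path_def using qne q(2) sq p(4) walk_nth[OF q(1)] by blast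
  moreover have "set q \<inter> S = {hd q}" using S2 q(3,5) abv(2) hd_in_set[OF qne] by auto
  moreover have "set q \<inter> T = {last q}" using T2 q(4,5) cwd(2) last_in_set[OF qne] by auto
  ultimately show ?thesis unfolding path_from_to_def using sq qne by blast
qed

lemma bramble_elem:
  assumes "bramble V E B" "l \<le> bramble_order V (bramble_restr B S)" "finite X" "card X < l"
  shows "\<exists>A\<in>B. A \<inter> S \<noteq> {} \<and> A \<inter> X = {}"
proof (rule ccontr)
  assume "\<not> ?thesis"
  then have h: "\<forall>A\<in>B. A \<inter> S \<noteq> {} \<longrightarrow> A \<inter> X \<noteq> {}" by blast
  have "hitting_set V (bramble_restr B S) (X \<inter> V)"
    unfolding hitting_set_def bramble_restr_def
  proof (intro conjI ballI)
    fix A assume "A \<in> {Y \<in> B. Y \<inter> S \<noteq> {}}"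
    then have "A \<in> B" "A \<inter> S \<noteq> {}" by auto
    moreover have "A \<subseteq> V" using assms(1) \<open>A \<in> B\<close> unfolding bramble_def connected_set_def by blast
    ultimately show "A \<inter> (X \<inter> V) \<noteq> {}" using h by blast
  qed auto
  then have "bramble_order V (bramble_restr B S) \<le> card (X \<inter> V)"
    unfolding bramble_order_def by (intro Least_le) blast
  moreover have "card (X \<inter> V) \<le> card X" using assms(3) by (simp add: card_mono)
  ultimately show False using assms(2,4) by linarith
qed

lemma bramble_conn:
  assumes "bramble V E B"
    and "l \<le> bramble_order V (bramble_restr B S)" "l \<le> bramble_order V (bramble_restr B T)"
    and "finite X" "card X < l"
  shows "conn E S T X"
proof -
  obtain A where A: "A \<in> B" "A \<inter> S \<noteq> {}" "A \<inter> X = {}" using bramble_elem[OF assms(1,2,4,5)] by blast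
  obtain C where C: "C \<in> B" "C \<inter> T \<noteq> {}" "C \<inter> X = {}" using bramble_elem[OF assms(1,3,4,5)] by blast
  obtain s where s: "s \<in> A" "s \<in> S" using A by blast
  obtain t where t: "t \<in> C" "t \<in> T" using C by blast
  have cA: "\<forall>u\<in>A. \<forall>v\<in>A. (\<lambda>x y. x \<in> A \<and> y \<in> A \<and> E x y)\<^sup>*\<^sup>* u v"
    using assms(1) A(1) unfolding bramble_def connected_set_def by blast
  have cC: "\<forall>u\<in>C. \<forall>v\<in>C. (\<lambda>x y. x \<in> C \<and> y \<in> C \<and> E x y)\<^sup>*\<^sup>* u v"
    using assms(1) C(1) unfolding bramble_def connected_set_def by blast
  have "touch E A C" using assms(1) A(1) C(1) unfolding bramble_def by blast
  then consider (i) w where "w \<in> A" "w \<in> C" | (e) a c where "a \<in> A" "c \<in> C" "E a c"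
    unfolding touch_def by blast
  then show ?thesis
  proof cases
    case i
    obtain p1 where p1: "walk E p1" "hd p1 = s" "last p1 = w" "set p1 \<subseteq> A"
      using walk_rtranclp[of A E s w] cA s(1) i by blast
    obtain p2 where p2: "walk E p2" "hd p2 = w" "last p2 = t" "set p2 \<subseteq> C"
      using walk_rtranclp[of C E w t] cC t(1) i by blast
    have "walk E (p1 @ tl p2)" using walk_append_tl[OF p1(1) p2(1)] p1(3) p2(2) by simp
    moreover have "hd (p1 @ tl p2) = s" using p1(2) walk_ne[OF p1(1)] by simp
    moreover have "last (p1 @ tl p2) = t"
      using last_append_tl[OF walk_ne[OF p1(1)] walk_ne[OF p2(1)]] p1(3) p2(2,3) by simp
    moreover have "set (p1 @ tl p2) \<inter> X = {}" using p1(4) p2(4) tl_subset[of p2] A(3) C(3) by auto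
    ultimately show ?thesis unfolding conn_def using s(2) t(2) by metis
  next
    case e
    obtain p1 where p1: "walk E p1" "hd p1 = s" "last p1 = a" "set p1 \<subseteq> A"
      using walk_rtranclp[of A E s a] cA s(1) e by blast
    obtain p2 where p2: "walk E p2" "hd p2 = c" "last p2 = t" "set p2 \<subseteq> C"
      using walk_rtranclp[of C E c t] cC t(1) e by blast
    have "walk E (p1 @ p2)" using walk_append[OF p1(1) p2(1)] p1(3) p2(2) e(3) by simp
    moreover have "hd (p1 @ p2) = s" using p1(2) walk_ne[OF p1(1)] by simp
    moreover have "last (p1 @ p2) = t" using p2(3) walk_ne[OF p2(1)] by simp
    moreover have "set (p1 @ p2) \<inter> X = {}" using p1(4) p2(4) A(3) C(3) by auto
    ultimately show ?thesis unfolding conn_def using s(2) t(2) by metis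
  qed
qed

theorem lemma2p4:
  fixes V :: "'a set" and E :: "'a \<Rightarrow> 'a \<Rightarrow> bool" and B :: "'a set set"
    and S T :: "'a set" and l :: nat
  assumes "graph V E" and "bramble V E B"
    and "S \<subseteq> V" and "T \<subseteq> V"
    and "bramble_order V (bramble_restr B S) \<ge> l"
    and "bramble_order V (bramble_restr B T) \<ge> l"
  shows "\<exists>ps. length ps = l \<and> (\<forall>p\<in>set ps. path_from_to V E S T p) \<and>
           (\<forall>i<l. \<forall>j<l. i \<noteq> j \<longrightarrow> set (ps ! i) \<inter> set (ps ! j) = {})"
proof -
  have fV: "finite V" and eV: "\<forall>u v. E u v \<longrightarrow> u \<in> V \<and> v \<in> V"
    using assms(1) unfolding graph_def by auto
  have "{(u,v). E u v} \<subseteq> V \<times> V" using eV by auto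
  then have fE: "finite {(u,v). E u v}" using fV finite_subset by blast
  have fS: "finite S" and fT: "finite T" using assms(3,4) fV finite_subset by auto
  have "\<forall>X. finite X \<longrightarrow> card X < l \<longrightarrow> conn E S T X"
    using bramble_conn[OF assms(2,5,6)] by blast
  from menger[OF fE fS fT this] obtain P where P: "finite P" "card P = l" "linkage E S T P" by blast
  have "\<forall>p\<in>P. \<exists>q. path_from_to V E S T q \<and> q \<noteq> [] \<and> set q \<subseteq> set p"
  proof
    fix p assume "p \<in> P"
    then have p: "walk E p" "hd p \<in> S" "last p \<in> T" using P(3) unfolding linkage_def by auto
    have "set p \<subseteq> V" using walk_in_V[OF p(1) _ eV] p(2) assms(3) by blast
    then show "\<exists>q. path_from_to V E S T q \<and> q \<noteq> [] \<and> set q \<subseteq> set p" using walk_path p by blast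
  qed
  from refine[OF P(1) _ this] P(3) obtain P' where P': "finite P'" "card P' = l"
    "\<forall>q\<in>P'. path_from_to V E S T q" "disj P'" unfolding linkage_def P(2) by blast
  obtain ps where ps: "set ps = P'" "distinct ps" using finite_distinct_list[OF P'(1)] by blast
  have len: "length ps = l" using distinct_card[OF ps(2)] ps(1) P'(2) by simp
  have "\<forall>i<l. \<forall>j<l. i \<noteq> j \<longrightarrow> set (ps ! i) \<inter> set (ps ! j) = {}"
  proof (intro allI impI)
    fix i j assume "i < l" "j < l" "i \<noteq> j"
    then have "ps ! i \<noteq> ps ! j" "ps ! i \<in> P'" "ps ! j \<in> P'"
      using nth_eq_iff_index_eq[OF ps(2)] len ps(1) nth_mem by auto
    then show "set (ps ! i) \<inter> set (ps ! j) = {}" using P'(4) unfolding disj_def by blast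
  qed
  then show ?thesis using len ps(1) P'(3) by blast
qed

end
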